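(* In a network satisfying (H1) and (H2), if $X$ is a non-intermediate species, then for no $\ell\ge1$ does $x^{(\ell)}$ contain a monomial of the form $z^m$ with $m\ge2$ and $Z$ a non-intermediate species.
   Context: Species are capital letters, concentrations lower-case letters. Mass-action system: $\dot{\mathbf{x}}=\sum_{y\to y'}k_{yy'}\mathbf{x}^y(y'-y)$, rates $k_{yy'}>0$ (vector $\mathbf{k}$). Total derivative: $\dot\varphi=\sum_i\frac{\partial\varphi}{\partial x_i}\dot x_i$ with $\dot x_i$ replaced by the right-hand side; $\varphi^{(\ell)}$ its $\ell$-th iterate; a monomial appears in $\varphi^{(\ell)}$ if its coefficient (a polynomial in $\mathbf{k}$) is nonzero. (H1) Every connected component has the form $Y+S_0\rightleftarrows U_1\to Y+S_1\rightleftarrows\cdots\rightleftarrows U_L\to Y+S_L$ (reactions $Y+S_{j-1}\to U_j$, $U_j\to Y+S_{j-1}$, $U_j\to Y+S_j$), unique enzyme $Y$; intermediates distinct throughout the network; non-intermediates of a component pairwise distinct but may appear in other components; each complex in a unique component. $\mathscr{S}_U$ = substrates/products of the component of intermediate $U$. (H2) A partition $\mathscr{S}^{(0)}\sqcup\cdots\sqcup\mathscr{S}^{(M)}$ ($M\ge2$, nonempty, $\mathscr{S}^{(0)}$ the intermediates) with: for each intermediate $U$ with enzyme $Y$, some $\alpha\ge1$ has $\mathscr{S}_U\subseteq\mathscr{S}^{(\alpha)}$, $Y\notin\mathscr{S}^{(\alpha)}$. *)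

theory Defs
  imports "HOL-Library.Poly_Mapping"
begin

text \<open>Polynomials are
  integer polynomials (via poly_mapping) in the variables: concentrations
  (Inl s) and symbolic rate constants (Inr (y, y')) for reactions y -> y'.\<close>

type_synonym 's cplx = "'s \<Rightarrow>\<^sub>0 nat"
type_synonym 's var = "'s + ('s cplx \<times> 's cplx)"
type_synonym 's pol = "('s var \<Rightarrow>\<^sub>0 nat) \<Rightarrow>\<^sub>0 int"

definition Var :: "'v \<Rightarrow> (('v \<Rightarrow>\<^sub>0 nat) \<Rightarrow>\<^sub>0 int)" where
  "Var v = Poly_Mapping.single (Poly_Mapping.single v 1) 1"

definition xmon :: "'s cplx \<Rightarrow> 's pol" where
  "xmon y = (\<Prod>s\<in>Poly_Mapping.keys y. Var (Inl s) ^ Poly_Mapping.lookup y s)"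

definition pdiff :: "'v \<Rightarrow> (('v \<Rightarrow>\<^sub>0 nat) \<Rightarrow>\<^sub>0 int) \<Rightarrow> (('v \<Rightarrow>\<^sub>0 nat) \<Rightarrow>\<^sub>0 int)" where
  "pdiff v p = (\<Sum>m\<in>Poly_Mapping.keys p. Poly_Mapping.single (m - Poly_Mapping.single v 1)
                                 (Poly_Mapping.lookup p m * int (Poly_Mapping.lookup m v)))"

definition rhs :: "('s cplx \<times> 's cplx) set \<Rightarrow> 's \<Rightarrow> 's pol" where
  "rhs R i = (\<Sum>(y, y')\<in>R. Var (Inr (y, y')) * xmon y
                 * of_int (int (Poly_Mapping.lookup y' i) - int (Poly_Mapping.lookup y i)))"

definition tder :: "'s set \<Rightarrow> ('s cplx \<times> 's cplx) set \<Rightarrow> 's pol \<Rightarrow> 's pol" where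
  "tder Sp R \<phi> = (\<Sum>i\<in>Sp. pdiff (Inl i) \<phi> * rhs R i)"

text \<open>The concentration monomial x^mu appears in p, i.e. its coefficient
  (a polynomial in the rate constants) is nonzero.\<close>
definition contains_xmon :: "'s pol \<Rightarrow> 's cplx \<Rightarrow> bool" where
  "contains_xmon p \<mu> \<longleftrightarrow> (\<exists>m\<in>Poly_Mapping.keys p. \<forall>s. Poly_Mapping.lookup m (Inl s) = Poly_Mapping.lookup \<mu> s)"

text \<open>A component Y+S_0 <-> U_1 -> Y+S_1 <-> ... <-> U_L -> Y+S_L.
  subs = [S_0,...,S_L], ints = [U_1,...,U_L].\<close>
record 's comp =
  enz :: 's
  subs :: "'s list"
  ints :: "'s list"

definition ecx :: "'s comp \<Rightarrow> nat \<Rightarrow> 's cplx" where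
  "ecx c j = Poly_Mapping.single (enz c) 1 + Poly_Mapping.single (subs c ! j) 1"

definition icx :: "'s comp \<Rightarrow> nat \<Rightarrow> 's cplx" where
  "icx c j = Poly_Mapping.single (ints c ! (j - 1)) 1"

definition comp_reactions :: "'s comp \<Rightarrow> ('s cplx \<times> 's cplx) set" where
  "comp_reactions c = (\<Union>j\<in>{1..length (ints c)}.
     {(ecx c (j - 1), icx c j), (icx c j, ecx c (j - 1)), (icx c j, ecx c j)})"

definition comp_complexes :: "'s comp \<Rightarrow> 's cplx set" where
  "comp_complexes c = ecx c ` {0..length (ints c)} \<union> icx c ` {1..length (ints c)}"

definition wf_comp :: "'s comp \<Rightarrow> bool" where
  "wf_comp c \<longleftrightarrow> length (ints c) \<ge> 1 \<and> length (subs c) = length (ints c) + 1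
                 \<and> distinct (enz c # subs c)"

definition species :: "'s comp list \<Rightarrow> 's set" where
  "species cs = (\<Union>c\<in>set cs. insert (enz c) (set (subs c) \<union> set (ints c)))"

definition intermediates :: "'s comp list \<Rightarrow> 's set" where
  "intermediates cs = (\<Union>c\<in>set cs. set (ints c))"

definition reactions :: "'s comp list \<Rightarrow> ('s cplx \<times> 's cplx) set" where
  "reactions cs = (\<Union>c\<in>set cs. comp_reactions c)"

definition H1 :: "'s comp list \<Rightarrow> bool" where
  "H1 cs \<longleftrightarrow> (\<forall>c\<in>set cs. wf_comp c)
     \<and> distinct (concat (map ints cs))
     \<and> (\<forall>c\<in>set cs. \<forall>c'\<in>set cs. set (ints c) \<inter> insert (enz c') (set (subs c')) = {})
     \<and> (\<forall>i<length cs. \<forall>j<length cs. i \<noteq> j \<longrightarrow>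
           comp_complexes (cs ! i) \<inter> comp_complexes (cs ! j) = {})"

definition H2 :: "'s comp list \<Rightarrow> (nat \<Rightarrow> 's set) \<Rightarrow> nat \<Rightarrow> bool" where
  "H2 cs P M \<longleftrightarrow> M \<ge> 2
     \<and> (\<forall>\<alpha>\<le>M. P \<alpha> \<noteq> {})
     \<and> (\<forall>\<alpha>\<le>M. \<forall>\<beta>\<le>M. \<alpha> \<noteq> \<beta> \<longrightarrow> P \<alpha> \<inter> P \<beta> = {})
     \<and> (\<Union>\<alpha>\<in>{0..M}. P \<alpha>) = species cs
     \<and> P 0 = intermediates cs
     \<and> (\<forall>c\<in>set cs. \<forall>U\<in>set (ints c). \<exists>\<alpha>\<in>{1..M}. set (subs c) \<subseteq> P \<alpha> \<and> enz c \<notin> P \<alpha>)"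

end

theory Submission
  imports Defs
begin

definition G :: "'s cplx \<Rightarrow> ('s var \<Rightarrow>\<^sub>0 nat) \<Rightarrow> bool" where
  "G y m \<longleftrightarrow> (\<forall>s. Poly_Mapping.lookup y s \<le> Poly_Mapping.lookup m (Inl s))"

lemma Var_pow: "Var v ^ k = Poly_Mapping.single (Poly_Mapping.single v k) (1::int)"
proof (induction k)
  case 0 then show ?case by simp
next
  case (Suc k)
  then show ?case
    by (simp add: Var_def mult_single single_add[symmetric])
qed

lemma prod_single: "(\<Prod>s\<in>A. Poly_Mapping.single (f s) (1::int)) = Poly_Mapping.single (\<Sum>s\<in>A. f s) 1"
proof (induction A rule: infinite_finite_induct)
  case (infinite A) then show ?case by simp
next
  case empty then show ?case by simp
next
  case (insert x F) then show ?case by (simp add: mult_single)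
qed

lemma xmon_eq: "xmon y = Poly_Mapping.single (\<Sum>s\<in>Poly_Mapping.keys y. Poly_Mapping.single (Inl s) (Poly_Mapping.lookup y s)) 1"
  unfolding xmon_def by (simp add: Var_pow prod_single)

lemma G_xmon: "m \<in> Poly_Mapping.keys (xmon y) \<Longrightarrow> G y m"
  unfolding xmon_eq G_def
  by (auto simp: lookup_sum lookup_single when_def in_keys_iff)

lemma G_add1: "G y a \<Longrightarrow> G y (a + b)"
  unfolding G_def by (simp add: lookup_add trans_le_add1)

lemma G_add2: "G y b \<Longrightarrow> G y (a + b)"
  unfolding G_def by (simp add: lookup_add trans_le_add2)

lemma G_multL: "(\<And>a. a \<in> Poly_Mapping.keys p \<Longrightarrow> G y a) \<Longrightarrow> m \<in> Poly_Mapping.keys (p * q) \<Longrightarrow> G y m"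
proof -
  assume h: "\<And>a. a \<in> Poly_Mapping.keys p \<Longrightarrow> G y a" and m: "m \<in> Poly_Mapping.keys (p * q)"
  then obtain a b where "a \<in> Poly_Mapping.keys p" "m = a + b" using keys_mult[of p q] by blast
  then show "G y m" using h G_add1 by blast
qed

lemma G_multR: "(\<And>a. a \<in> Poly_Mapping.keys q \<Longrightarrow> G y a) \<Longrightarrow> m \<in> Poly_Mapping.keys (p * q) \<Longrightarrow> G y m"
proof -
  assume h: "\<And>a. a \<in> Poly_Mapping.keys q \<Longrightarrow> G y a" and m: "m \<in> Poly_Mapping.keys (p * q)"
  then obtain a b where "b \<in> Poly_Mapping.keys q" "m = a + b" using keys_mult[of p q] by blast
  then show "G y m" using h G_add2 by blast
qed

lemma keys_rhs: "m \<in> Poly_Mapping.keys (rhs R i) \<Longrightarrow> \<exists>(y, y')\<in>R. G y m"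
proof -
  assume a: "m \<in> Poly_Mapping.keys (rhs R i)"
  have "Poly_Mapping.keys (rhs R i) \<subseteq> (\<Union>r\<in>R. Poly_Mapping.keys ((\<lambda>(y, y'). Var (Inr (y, y')) * xmon y
                 * of_int (int (Poly_Mapping.lookup y' i) - int (Poly_Mapping.lookup y i))) r))"
    unfolding rhs_def by (rule keys_sum)
  with a obtain y y' where r: "(y, y') \<in> R" and
    m: "m \<in> Poly_Mapping.keys (Var (Inr (y, y')) * xmon y
                 * of_int (int (Poly_Mapping.lookup y' i) - int (Poly_Mapping.lookup y i)))"
    by auto
  have h1: "\<And>a. a \<in> Poly_Mapping.keys (Var (Inr (y, y')) * xmon y) \<Longrightarrow> G y a"
    by (rule G_multR, rule G_xmon)
  have "G y m"
    by (rule G_multL[OF h1 m])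
  with r show ?thesis by auto
qed

lemma keys_tder: "m \<in> Poly_Mapping.keys (tder Sp R \<phi>) \<Longrightarrow> \<exists>(y, y')\<in>R. G y m"
proof -
  assume a: "m \<in> Poly_Mapping.keys (tder Sp R \<phi>)"
  have "Poly_Mapping.keys (tder Sp R \<phi>) \<subseteq> (\<Union>i\<in>Sp. Poly_Mapping.keys (pdiff (Inl i) \<phi> * rhs R i))"
    unfolding tder_def by (rule keys_sum)
  with a obtain i where "m \<in> Poly_Mapping.keys (pdiff (Inl i) \<phi> * rhs R i)" by auto
  then obtain a b where ab: "a \<in> Poly_Mapping.keys (rhs R i)" "m = b + a"
    using keys_mult[of "pdiff (Inl i) \<phi>" "rhs R i"] by blast
  from keys_rhs[OF ab(1)] obtain y y' where "(y, y') \<in> R" "G y a" by auto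
  moreover have "G y m" using \<open>G y a\<close> ab(2) G_add2 by blast
  ultimately show ?thesis by auto
qed

theorem mainTheorem9:
  fixes cs :: "'s comp list" and P :: "nat \<Rightarrow> 's set" and M :: nat
    and X Z :: 's and l m :: nat
  assumes "H1 cs" and "H2 cs P M"
    and "X \<in> species cs - intermediates cs"
    and "Z \<in> species cs - intermediates cs"
    and "l \<ge> 1" and "m \<ge> 2"
  shows "\<not> contains_xmon ((tder (species cs) (reactions cs) ^^ l) (Var (Inl X)))
            (Poly_Mapping.single Z m)"
proof
  assume "contains_xmon ((tder (species cs) (reactions cs) ^^ l) (Var (Inl X)))
            (Poly_Mapping.single Z m)"
  moreover obtain k where l: "l = Suc k" using assms(5) by (cases l) auto
  ultimately obtain m0 where
    k: "m0 \<in> Poly_Mapping.keys (tder (species cs) (reactions cs) ((tder (species cs) (reactions cs) ^^ k) (Var (Inl X))))"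
    and eq: "\<forall>s. Poly_Mapping.lookup m0 (Inl s) = Poly_Mapping.lookup (Poly_Mapping.single Z m) s"
    unfolding contains_xmon_def by auto
  from keys_tder[OF k] obtain y y' where r: "(y, y') \<in> reactions cs" and g: "G y m0" by auto
  have le: "\<And>s. s \<noteq> Z \<Longrightarrow> Poly_Mapping.lookup y s = 0"
  proof -
    fix s assume "s \<noteq> Z"
    hence "Poly_Mapping.lookup (Poly_Mapping.single Z m) s = 0" by (simp add: lookup_single_not_eq)
    moreover have "Poly_Mapping.lookup y s \<le> Poly_Mapping.lookup m0 (Inl s)" using g unfolding G_def by blast
    ultimately show "Poly_Mapping.lookup y s = 0" using eq by simp
  qed
  from r obtain c j where c: "c \<in> set cs" and j: "j \<in> {1..length (ints c)}"
    and yy: "(y, y') \<in> {(ecx c (j - 1), icx c j), (icx c j, ecx c (j - 1)), (icx c j, ecx c j)}"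
    unfolding reactions_def comp_reactions_def by blast
  have wf: "wf_comp c" using assms(1) c unfolding H1_def by auto
  have ecx_bad: "False" if "y = ecx c i" "i < length (subs c)" for i
  proof -
    have d: "enz c \<noteq> subs c ! i" using wf that(2) unfolding wf_comp_def by auto
    have "Poly_Mapping.lookup y (enz c) \<noteq> 0" "Poly_Mapping.lookup y (subs c ! i) \<noteq> 0"
      using that(1) by (auto simp: ecx_def lookup_add)
    then show False using le[of "enz c"] le[of "subs c ! i"] d by fastforce
  qed
  have icx_bad: False if "y = icx c j"
  proof -
    have "ints c ! (j - 1) \<in> intermediates cs"
      using j c unfolding intermediates_def by (auto intro!: bexI[of _ c])
    hence "ints c ! (j - 1) \<noteq> Z" using assms(4) by auto
    moreover have "Poly_Mapping.lookup y (ints c ! (j - 1)) \<noteq> 0" using that by (simp add: icx_def)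
    ultimately show False using le[of "ints c ! (j - 1)"] by simp
  qed
  have "length (subs c) = length (ints c) + 1" using wf unfolding wf_comp_def by auto
  hence i1: "j - 1 < length (subs c)" and i2: "j < length (subs c)" using j by auto
  from yy have "y = ecx c (j - 1) \<or> y = icx c j \<or> y = icx c j" by blast
  then show False using ecx_bad[OF _ i1] icx_bad by blast
qed

end
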